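(* Let $\mathbf{L}=\langle L,\leq,0,1\rangle$ be a totally ordered complete lattice and let $\mathcal{D}_1,\mathcal{D}_2$ be ranked data tables on the same relation scheme $R$. Then $\mathcal{D}_1 \sqsubseteq \mathcal{D}_2$ if and only if there exists an order-preserving map $f\colon L\to L$ such that $\mathcal{D}_1\circ f=\mathcal{D}_2$.
   Context: A relation scheme $R$ is a finite set of attributes, each with a (at most countable) set of admissible values; a tuple on $R$ assigns to each attribute of $R$ an admissible value; $\mathrm{Tupl}(R)$ is the set of all tuples on $R$. A ranked data table (RDT) on $R$ is a map $\mathcal{D}\colon\mathrm{Tupl}(R)\to L$ with $\{r;\ \mathcal{D}(r)>0\}$ finite. For an RDT $\mathcal{D}$ and $r\in\mathrm{Tupl}(R)$, $\mathcal{U}(\mathcal{D},r)=\{r'\in\mathrm{Tupl}(R);\ \mathcal{D}(r')\geq\mathcal{D}(r)\}$; $\mathcal{D}_1\sqsubseteq\mathcal{D}_2$ means $\mathcal{U}(\mathcal{D}_1,r)\subseteq\mathcal{U}(\mathcal{D}_2,r)$ for all $r\in\mathrm{Tupl}(R)$. A map $f$ is order preserving if $a\leq b$ implies $f(a)\leq f(b)$. For a map $f$ on a subset of $L$ containing the values of $\mathcal{D}$, $\mathcal{D}\circ f$ denotes the map $r\mapsto f(\mathcal{D}(r))$. *)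

theory Defs
  imports Main "HOL-Library.Countable_Set"
begin

text \<open>A tuple on R assigns
  to each attribute of R an admissible value; outside R it is fixed to undefined, so
  that tuples on R are exactly the maps R -> values.\<close>

definition rel_scheme :: "'a set \<Rightarrow> ('a \<Rightarrow> 'v set) \<Rightarrow> bool" where
  "rel_scheme R Dom \<longleftrightarrow> finite R \<and> (\<forall>y\<in>R. countable (Dom y))"

definition Tupl :: "'a set \<Rightarrow> ('a \<Rightarrow> 'v set) \<Rightarrow> ('a \<Rightarrow> 'v) set" where
  "Tupl R Dom = {r. (\<forall>y\<in>R. r y \<in> Dom y) \<and> (\<forall>y. y \<notin> R \<longrightarrow> r y = undefined)}"

text \<open>A ranked data table on R: a map from Tupl R to L (only its values on Tupl R
  matter) with finitely many tuples of positive rank.\<close>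

definition is_RDT :: "'a set \<Rightarrow> ('a \<Rightarrow> 'v set) \<Rightarrow> (('a \<Rightarrow> 'v) \<Rightarrow> 'l::complete_lattice) \<Rightarrow> bool" where
  "is_RDT R Dom D \<longleftrightarrow> finite {r \<in> Tupl R Dom. D r > bot}"

definition Ucone :: "'a set \<Rightarrow> ('a \<Rightarrow> 'v set) \<Rightarrow> (('a \<Rightarrow> 'v) \<Rightarrow> 'l::order) \<Rightarrow> ('a \<Rightarrow> 'v) \<Rightarrow> ('a \<Rightarrow> 'v) set" where
  "Ucone R Dom D r = {r' \<in> Tupl R Dom. D r' \<ge> D r}"

definition rdt_le :: "'a set \<Rightarrow> ('a \<Rightarrow> 'v set) \<Rightarrow> (('a \<Rightarrow> 'v) \<Rightarrow> 'l::order) \<Rightarrow> (('a \<Rightarrow> 'v) \<Rightarrow> 'l) \<Rightarrow> bool" where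
  "rdt_le R Dom D1 D2 \<longleftrightarrow> (\<forall>r\<in>Tupl R Dom. Ucone R Dom D1 r \<subseteq> Ucone R Dom D2 r)"

end

theory Submission
  imports Defs
begin

theorem theorem4:
  fixes R :: "'a set" and Dom :: "'a \<Rightarrow> 'v set"
    and D1 D2 :: "('a \<Rightarrow> 'v) \<Rightarrow> 'l::{complete_lattice, linorder}"
  assumes "rel_scheme R Dom"
    and "is_RDT R Dom D1" and "is_RDT R Dom D2"
  shows "rdt_le R Dom D1 D2 \<longleftrightarrow>
         (\<exists>f :: 'l \<Rightarrow> 'l. mono f \<and> (\<forall>r\<in>Tupl R Dom. f (D1 r) = D2 r))"
proof
  assume le: "rdt_le R Dom D1 D2"
  have key: "D2 r' \<le> D2 r" if "r \<in> Tupl R Dom" "r' \<in> Tupl R Dom" "D1 r' \<le> D1 r" for r r'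
    using le that unfolding rdt_le_def Ucone_def by blast
  define f where "f a = Sup {D2 r | r. r \<in> Tupl R Dom \<and> D1 r \<le> a}" for a
  have "mono f"
    unfolding mono_def f_def by (auto intro!: Sup_subset_mono dest: order_trans)
  moreover have "\<forall>r\<in>Tupl R Dom. f (D1 r) = D2 r"
  proof
    fix r assume r: "r \<in> Tupl R Dom"
    show "f (D1 r) = D2 r" unfolding f_def
    proof (rule antisym)
      show "Sup {D2 r' |r'. r' \<in> Tupl R Dom \<and> D1 r' \<le> D1 r} \<le> D2 r"
        using key r by (auto intro!: Sup_least)
      show "D2 r \<le> Sup {D2 r' |r'. r' \<in> Tupl R Dom \<and> D1 r' \<le> D1 r}"
        using r by (auto intro!: Sup_upper)
    qed
  qed
  ultimately show "\<exists>f :: 'l \<Rightarrow> 'l. mono f \<and> (\<forall>r\<in>Tupl R Dom. f (D1 r) = D2 r)" by blast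
next
  assume "\<exists>f :: 'l \<Rightarrow> 'l. mono f \<and> (\<forall>r\<in>Tupl R Dom. f (D1 r) = D2 r)"
  then obtain f :: "'l \<Rightarrow> 'l" where f: "mono f" "\<forall>r\<in>Tupl R Dom. f (D1 r) = D2 r" by blast
  show "rdt_le R Dom D1 D2"
    unfolding rdt_le_def Ucone_def
    using f by (auto dest: monoD[OF f(1)] simp del: )
qed

end
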